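(* Let $(v,b)$ satisfy (C2), with associated pair $(\lambda,\varepsilon)$. Let $\mu=v/2$ if $\varepsilon\equiv v/2\pmod 2$ and $\mu=v/2+1$ otherwise. Then every TS$(v;b)$ $(V,\mathcal F)$ satisfies $$\sum_{\{x,y\}\in\binom V2}\lambda_{x,y}^2\ \ge\ \binom v2\lambda^2+2\varepsilon\lambda+\mu,$$ and equality holds for any TS$(v;b)$ in which all $\lambda_{x,y}\in\{\lambda-1,\lambda,\lambda+1\}$ and whose defect graph is isomorphic to $H^0_{v,\varepsilon}$ (when $\varepsilon\equiv v/2\pmod2$) or to one of $H^1_{v,\varepsilon},H^2_{v,\varepsilon},H^3_{v,\varepsilon},H^4_{v,\varepsilon}$ (when $\varepsilon\not\equiv v/2\pmod 2$).
   Context: A triple system TS$(v;b)$ is a pair $(V,\mathcal F)$ where $V$ is a set of $v\ge 3$ points and $\mathcal F$ is a multiset of $b$ 3-subsets of $V$ (blocks); repeated blocks allowed. $\lambda_{x,y}$ is the number of blocks (with multiplicity) containing $\{x,y\}$. The associated pair $(\lambda,\varepsilon)$ of $(v,b)$: integers with $3b=\lambda\binom v2+\varepsilon$, $-v/2<\varepsilon<v/2$. (C2): $v$ even and $\lambda v(v-1)/6-v/6<b<\lambda v(v-1)/6+v/6$ for an odd integer $\lambda$ (this is the $\lambda$ of the associated pair). Defect graph: if all $\lambda_{x,y}\in\{\lambda-1,\lambda,\lambda+1\}$, the defect graph is the graph on $V$ with edges $\{x,y\}$ with $\lambda_{x,y}=\lambda+1$ (labelled $+1$) and with $\lambda_{x,y}=\lambda-1$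 (labelled $-1$); isomorphisms preserve labels. $H^0_{v,\varepsilon}$: perfect matching of $V$ with $(v+2\varepsilon)/4$ edges $+1$ and $(v-2\varepsilon)/4$ edges $-1$. For $1\le i\le 4$, $H^i_{v,\varepsilon}$ is the vertex-disjoint union of a star $K_{1,3}$ and a matching covering the remaining $v-4$ vertices, where: $H^1$: star with two $+1$ and one $-1$ edge, matching with $(v-6+2\varepsilon)/4$ edges $+1$ and $(v-2-2\varepsilon)/4$ edges $-1$; $H^2$: star with one $+1$ and two $-1$ edges, matching with $(v-2+2\varepsilon)/4$ edges $+1$ and $(v-6-2\varepsilon)/4$ edges $-1$; $H^3$: star with three $+1$ edges, matching with $(v-10+2\varepsilon)/4$ edges $+1$ and $(v+2-2\varepsilon)/4$ edges $-1$; $H^4$: star with three $-1$ edges, matching with $(v+2+2\varepsilon)/4$ edges $+1$ and $(v-10-2\varepsilon)/4$ edges $-1$. *)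

theory Defs
  imports Main "HOL-Library.Multiset"
begin

definition pairs :: "'a set \<Rightarrow> 'a set set" where
  "pairs V = {e. e \<subseteq> V \<and> card e = 2}"

text \<open>A triple system TS(v;b) on V: a finite multiset of 3-subsets (blocks); b = size F.\<close>
definition is_TS :: "'a set \<Rightarrow> 'a set multiset \<Rightarrow> bool" where
  "is_TS V F \<longleftrightarrow> finite V \<and> card V \<ge> 3 \<and> (\<forall>B\<in>#F. B \<subseteq> V \<and> card B = 3)"

definition lamP :: "'a set multiset \<Rightarrow> 'a set \<Rightarrow> nat" where
  "lamP F e = size (filter_mset (\<lambda>B. e \<subseteq> B) F)"

definition assoc_pair :: "nat \<Rightarrow> nat \<Rightarrow> int \<Rightarrow> int \<Rightarrow> bool" where
  "assoc_pair v b lam eps \<longleftrightarrow>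
     3 * int b = lam * int (v choose 2) + eps \<and> - int v < 2 * eps \<and> 2 * eps < int v"

text \<open>Condition (C2): v even and lambda v(v-1)/6 - v/6 < b < lambda v(v-1)/6 + v/6
  for an odd integer lambda (multiplied through by 6).\<close>
definition C2 :: "nat \<Rightarrow> nat \<Rightarrow> bool" where
  "C2 v b \<longleftrightarrow> even v \<and> (\<exists>lam::int. odd lam \<and>
      lam * int v * (int v - 1) - int v < 6 * int b \<and>
      6 * int b < lam * int v * (int v - 1) + int v)"

text \<open>Labelled graphs on V are functions on 2-subsets with values in {-1,0,1};
  value 0 means "no edge".  Isomorphism: a bijection of V preserving labels.\<close>
definition lg_iso :: "'a set \<Rightarrow> ('a set \<Rightarrow> int) \<Rightarrow> ('a set \<Rightarrow> int) \<Rightarrow> bool" where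
  "lg_iso V G H \<longleftrightarrow> (\<exists>\<sigma>. bij_betw \<sigma> V V \<and> (\<forall>e\<in>pairs V. G e = H (\<sigma> ` e)))"

definition defect :: "'a set multiset \<Rightarrow> int \<Rightarrow> 'a set \<Rightarrow> int" where
  "defect F lam e = int (lamP F e) - lam"

definition is_labgraph :: "'a set \<Rightarrow> ('a set \<Rightarrow> int) \<Rightarrow> bool" where
  "is_labgraph V H \<longleftrightarrow> (\<forall>e\<in>pairs V. H e \<in> {-1, 0, 1})"

definition is_H0 :: "'a set \<Rightarrow> int \<Rightarrow> ('a set \<Rightarrow> int) \<Rightarrow> bool" where
  "is_H0 V eps H \<longleftrightarrow> is_labgraph V H \<and>
     (\<forall>x\<in>V. \<exists>!e. e \<in> pairs V \<and> H e \<noteq> 0 \<and> x \<in> e) \<and>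
     4 * int (card {e\<in>pairs V. H e = 1}) = int (card V) + 2 * eps \<and>
     4 * int (card {e\<in>pairs V. H e = -1}) = int (card V) - 2 * eps"

text \<open>Vertex-disjoint union of a star K_{1,3} (centre c, leaves A) with p edges +1 and
  m edges -1, and a perfect matching of the remaining v-4 vertices with pM4/4 edges +1
  and mM4/4 edges -1.\<close>
definition is_Hstar :: "'a set \<Rightarrow> nat \<Rightarrow> nat \<Rightarrow> int \<Rightarrow> int \<Rightarrow> ('a set \<Rightarrow> int) \<Rightarrow> bool" where
  "is_Hstar V p m pM4 mM4 H \<longleftrightarrow> is_labgraph V H \<and>
     (\<exists>c A. c \<in> V \<and> A \<subseteq> V \<and> c \<notin> A \<and> card A = 3 \<and>
        (\<forall>a\<in>A. H {c, a} \<noteq> 0) \<and>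
        card {a\<in>A. H {c, a} = 1} = p \<and> card {a\<in>A. H {c, a} = -1} = m \<and>
        (\<forall>e\<in>pairs V. H e \<noteq> 0 \<and> e \<inter> insert c A \<noteq> {} \<longrightarrow> (\<exists>a\<in>A. e = {c, a})) \<and>
        (\<forall>x\<in>V - insert c A. \<exists>!e. e \<in> pairs V \<and> H e \<noteq> 0 \<and> x \<in> e) \<and>
        4 * int (card {e\<in>pairs (V - insert c A). H e = 1}) = pM4 \<and>
        4 * int (card {e\<in>pairs (V - insert c A). H e = -1}) = mM4)"

definition is_H1 :: "'a set \<Rightarrow> int \<Rightarrow> ('a set \<Rightarrow> int) \<Rightarrow> bool" where
  "is_H1 V eps H = is_Hstar V 2 1 (int (card V) - 6 + 2 * eps) (int (card V) - 2 - 2 * eps) H"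
definition is_H2 :: "'a set \<Rightarrow> int \<Rightarrow> ('a set \<Rightarrow> int) \<Rightarrow> bool" where
  "is_H2 V eps H = is_Hstar V 1 2 (int (card V) - 2 + 2 * eps) (int (card V) - 6 - 2 * eps) H"
definition is_H3 :: "'a set \<Rightarrow> int \<Rightarrow> ('a set \<Rightarrow> int) \<Rightarrow> bool" where
  "is_H3 V eps H = is_Hstar V 3 0 (int (card V) - 10 + 2 * eps) (int (card V) + 2 - 2 * eps) H"
definition is_H4 :: "'a set \<Rightarrow> int \<Rightarrow> ('a set \<Rightarrow> int) \<Rightarrow> bool" where
  "is_H4 V eps H = is_Hstar V 0 3 (int (card V) + 2 + 2 * eps) (int (card V) - 10 - 2 * eps) H"

end

theory Submission
  imports Defs
begin

lemma finite_pairs: "finite V \<Longrightarrow> finite (pairs V)"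
  unfolding pairs_def by (rule finite_subset[of _ "Pow V"]) auto

lemma card_pairs: "finite V \<Longrightarrow> card (pairs V) = card V choose 2"
  unfolding pairs_def using n_subsets by blast

lemma pairs_through: "x \<in> S \<Longrightarrow> {e\<in>pairs S. x\<in>e} = (\<lambda>y. {x,y}) ` (S - {x})"
proof
  assume x: "x \<in> S"
  show "{e\<in>pairs S. x\<in>e} \<subseteq> (\<lambda>y. {x,y}) ` (S - {x})"
  proof
    fix e assume "e \<in> {e\<in>pairs S. x\<in>e}"
    then have e: "e \<subseteq> S" "card e = 2" "x \<in> e" by (auto simp: pairs_def)
    then obtain a b where ab: "e = {a,b}" "a \<noteq> b" by (auto simp: card_2_iff)
    show "e \<in> (\<lambda>y. {x,y}) ` (S - {x})"
      using e ab by (auto simp: insert_commute)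
  qed
  show "(\<lambda>y. {x,y}) ` (S - {x}) \<subseteq> {e\<in>pairs S. x\<in>e}"
    using x by (auto simp: pairs_def)
qed

lemma card_pairs_through: "finite S \<Longrightarrow> x \<in> S \<Longrightarrow> card {e\<in>pairs S. x\<in>e} = card S - 1"
proof -
  assume "finite S" "x \<in> S"
  have "inj_on (\<lambda>y. {x,y}) (S - {x})"
    by (auto simp: inj_on_def doubleton_eq_iff)
  then show ?thesis using pairs_through[OF \<open>x \<in> S\<close>] \<open>finite S\<close> \<open>x \<in> S\<close>
    by (simp add: card_image)
qed

lemma sum_ind: "finite A \<Longrightarrow> (\<Sum>e\<in>A. (if P e then 1 else 0 :: nat)) = card {e\<in>A. P e}"
  by (simp add: sum.inter_filter[symmetric])

lemma lamP_empty: "lamP {#} e = 0" unfolding lamP_def by simp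

lemma lamP_add: "lamP (add_mset B F) e = (if e \<subseteq> B then 1 else 0) + lamP F e"
  unfolding lamP_def by simp

lemma sum_lamP: "finite V \<Longrightarrow> \<forall>B\<in>#F. B \<subseteq> V \<and> card B = 3 \<Longrightarrow>
   (\<Sum>e\<in>pairs V. lamP F e) = 3 * size F"
proof (induction F)
  case empty then show ?case by (simp add: lamP_empty)
next
  case (add B F)
  have B: "B \<subseteq> V" "card B = 3" using add.prems by auto
  have fB: "finite B" using B by (metis card.infinite zero_neq_numeral)
  have "{e\<in>pairs V. e \<subseteq> B} = pairs B" using B by (auto simp: pairs_def)
  then have c: "card {e\<in>pairs V. e \<subseteq> B} = 3" using card_pairs[OF fB] B by (simp add: choose_two)
  have "(\<Sum>e\<in>pairs V. lamP (add_mset B F) e)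
      = (\<Sum>e\<in>pairs V. (if e \<subseteq> B then 1 else 0)) + (\<Sum>e\<in>pairs V. lamP F e)"
    by (simp add: lamP_add sum.distrib)
  also have "\<dots> = 3 + 3 * size F"
    using sum_ind[OF finite_pairs[OF add.prems(1)]] c add by simp
  finally show ?case by simp
qed

lemma sum_lamP_vertex: "finite V \<Longrightarrow> x \<in> V \<Longrightarrow> \<forall>B\<in>#F. B \<subseteq> V \<and> card B = 3 \<Longrightarrow>
   (\<Sum>e\<in>{e\<in>pairs V. x\<in>e}. lamP F e) = 2 * size {#B\<in>#F. x\<in>B#}"
proof (induction F)
  case empty then show ?case by (simp add: lamP_empty)
next
  case (add B F)
  let ?T = "{e\<in>pairs V. x\<in>e}"
  have B: "B \<subseteq> V" "card B = 3" using add.prems by auto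
  have fB: "finite B" using B by (metis card.infinite zero_neq_numeral)
  have fT: "finite ?T" using finite_pairs[OF add.prems(1)] by simp
  have c: "card {e\<in>?T. e \<subseteq> B} = (if x \<in> B then 2 else 0)"
  proof (cases "x \<in> B")
    case True
    have "{e\<in>?T. e \<subseteq> B} = {e\<in>pairs B. x\<in>e}" using B by (auto simp: pairs_def)
    then show ?thesis using card_pairs_through[OF fB True] B True by simp
  next
    case False
    then have "{e\<in>?T. e \<subseteq> B} = {}" by auto
    then show ?thesis using False by (simp only: card.empty if_False)
  qed
  have "(\<Sum>e\<in>?T. lamP (add_mset B F) e)
      = (\<Sum>e\<in>?T. (if e \<subseteq> B then 1 else 0)) + (\<Sum>e\<in>?T. lamP F e)"
    by (simp add: lamP_add sum.distrib)
  also have "\<dots> = (if x \<in> B then 2 else 0) + 2 * size {#B\<in>#F. x\<in>B#}"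
    using sum_ind[OF fT] c add by simp
  finally show ?case by simp
qed

lemma bij_pairs: "finite V \<Longrightarrow> bij_betw \<sigma> V V \<Longrightarrow> bij_betw ((`) \<sigma>) (pairs V) (pairs V)"
proof -
  assume fV: "finite V" and b: "bij_betw \<sigma> V V"
  have inj: "inj_on \<sigma> V" and im: "\<sigma> ` V = V" using b by (auto simp: bij_betw_def)
  have i2: "inj_on ((`) \<sigma>) (pairs V)"
    unfolding inj_on_def pairs_def using inj by (auto simp: inj_on_image_eq_iff)
  have s: "(`) \<sigma> ` pairs V \<subseteq> pairs V"
  proof
    fix e' assume "e' \<in> (`) \<sigma> ` pairs V"
    then obtain e where e: "e \<subseteq> V" "card e = 2" "e' = \<sigma> ` e" by (auto simp: pairs_def)
    have "card (\<sigma> ` e) = 2" using e inj by (metis card_image inj_on_subset)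
    then show "e' \<in> pairs V" using e im by (auto simp: pairs_def)
  qed
  show ?thesis using endo_inj_surj[OF finite_pairs[OF fV] s i2] i2 by (simp add: bij_betw_def)
qed

lemma iso_card: "finite V \<Longrightarrow> lg_iso V G H \<Longrightarrow>
   card {e\<in>pairs V. G e \<noteq> 0} = card {e\<in>pairs V. H e \<noteq> 0}"
proof -
  assume fV: "finite V" and "lg_iso V G H"
  then obtain \<sigma> where b: "bij_betw \<sigma> V V" and g: "\<forall>e\<in>pairs V. G e = H (\<sigma> ` e)"
    by (auto simp: lg_iso_def)
  have "card {e\<in>pairs V. G e \<noteq> 0} = (\<Sum>e\<in>pairs V. (if G e \<noteq> 0 then 1 else 0))"
    using sum_ind[OF finite_pairs[OF fV]] by simp
  also have "\<dots> = (\<Sum>e\<in>pairs V. (if H (\<sigma> ` e) \<noteq> 0 then 1 else 0))"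
    using g by (intro sum.cong) auto
  also have "\<dots> = (\<Sum>e\<in>pairs V. (if H e \<noteq> 0 then 1 else 0))"
    using sum.reindex_bij_betw[OF bij_pairs[OF fV b], of "\<lambda>e. (if H e \<noteq> 0 then 1 else 0::nat)"]
    by simp
  also have "\<dots> = card {e\<in>pairs V. H e \<noteq> 0}"
    using sum_ind[OF finite_pairs[OF fV]] by simp
  finally show ?thesis .
qed

lemma lab_split: "finite Q \<Longrightarrow> Q \<subseteq> pairs V \<Longrightarrow> is_labgraph V H \<Longrightarrow>
  card {e\<in>Q. H e \<noteq> 0} = card {e\<in>Q. H e = 1} + card {e\<in>Q. H e = -1}"
proof -
  assume f: "finite Q" and Q: "Q \<subseteq> pairs V" and l: "is_labgraph V H"
  have "{e\<in>Q. H e \<noteq> 0} = {e\<in>Q. H e = 1} \<union> {e\<in>Q. H e = -1}"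
    using Q l by (auto simp: is_labgraph_def)
  moreover have "{e\<in>Q. H e = 1} \<inter> {e\<in>Q. H e = -1} = {}" by auto
  ultimately show ?thesis using f by (simp add: card_Un_disjoint)
qed

lemma H0_card: "finite V \<Longrightarrow> is_H0 V eps H \<Longrightarrow>
   2 * int (card {e\<in>pairs V. H e \<noteq> 0}) = int (card V)"
  using lab_split[OF finite_pairs order_refl, of V H] unfolding is_H0_def by auto

lemma Hstar_card: "finite V \<Longrightarrow> is_Hstar V p m pM4 mM4 H \<Longrightarrow>
   4 * int (card {e\<in>pairs V. H e \<noteq> 0}) = 12 + pM4 + mM4"
proof -
  assume fV: "finite V" and h: "is_Hstar V p m pM4 mM4 H"
  then have l: "is_labgraph V H" by (simp add: is_Hstar_def)
  from h obtain c A where c: "c \<in> V" "A \<subseteq> V" "c \<notin> A" "card A = 3"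
    and nz: "\<forall>a\<in>A. H {c, a} \<noteq> 0"
    and st: "\<forall>e\<in>pairs V. H e \<noteq> 0 \<and> e \<inter> insert c A \<noteq> {} \<longrightarrow> (\<exists>a\<in>A. e = {c, a})"
    and p1: "4 * int (card {e\<in>pairs (V - insert c A). H e = 1}) = pM4"
    and m1: "4 * int (card {e\<in>pairs (V - insert c A). H e = -1}) = mM4"
    unfolding is_Hstar_def by blast
  let ?W = "V - insert c A"
  have fA: "finite A" using c by (metis card.infinite zero_neq_numeral)
  have PW: "pairs ?W \<subseteq> pairs V" by (auto simp: pairs_def)
  have fW: "finite (pairs ?W)" using finite_pairs fV by auto
  have eq: "{e\<in>pairs V. H e \<noteq> 0} = (\<lambda>a. {c,a}) ` A \<union> {e\<in>pairs ?W. H e \<noteq> 0}"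
  proof
    show "{e\<in>pairs V. H e \<noteq> 0} \<subseteq> (\<lambda>a. {c,a}) ` A \<union> {e\<in>pairs ?W. H e \<noteq> 0}"
    proof
      fix e assume e: "e \<in> {e\<in>pairs V. H e \<noteq> 0}"
      show "e \<in> (\<lambda>a. {c,a}) ` A \<union> {e\<in>pairs ?W. H e \<noteq> 0}"
      proof (cases "e \<inter> insert c A = {}")
        case True
        then have "e \<subseteq> ?W" using e by (auto simp: pairs_def)
        then have "e \<in> pairs ?W" using e by (simp add: pairs_def)
        then show ?thesis using e by blast
      next
        case False
        then obtain a where "a \<in> A" "e = {c,a}" using e st by blast
        then show ?thesis by blast
      qed
    qed
    show "(\<lambda>a. {c,a}) ` A \<union> {e\<in>pairs ?W. H e \<noteq> 0} \<subseteq> {e\<in>pairs V. H e \<noteq> 0}"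
    proof
      fix e assume "e \<in> (\<lambda>a. {c,a}) ` A \<union> {e\<in>pairs ?W. H e \<noteq> 0}"
      then show "e \<in> {e\<in>pairs V. H e \<noteq> 0}"
      proof
        assume "e \<in> (\<lambda>a. {c,a}) ` A"
        then obtain a where a: "a \<in> A" "e = {c,a}" by blast
        then have "a \<noteq> c" using c by blast
        then have "e \<in> pairs V" using a c by (auto simp: pairs_def)
        then show ?thesis using a nz by blast
      next
        assume "e \<in> {e\<in>pairs ?W. H e \<noteq> 0}"
        then show ?thesis using PW by blast
      qed
    qed
  qed
  have disj: "(\<lambda>a. {c,a}) ` A \<inter> {e\<in>pairs ?W. H e \<noteq> 0} = {}"
    unfolding pairs_def by blast
  have inj: "inj_on (\<lambda>a. {c,a}) A" using c by (auto simp: inj_on_def doubleton_eq_iff)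
  have "card {e\<in>pairs V. H e \<noteq> 0} = 3 + card {e\<in>pairs ?W. H e \<noteq> 0}"
    using eq disj fA fW inj c by (simp add: card_Un_disjoint card_image)
  moreover have "card {e\<in>pairs ?W. H e \<noteq> 0} = card {e\<in>pairs ?W. H e = 1} + card {e\<in>pairs ?W. H e = -1}"
    using lab_split[OF fW PW l] .
  ultimately show ?thesis using p1 m1 by simp
qed

lemma sq_ge1: "(x::int) \<noteq> 0 \<Longrightarrow> 1 \<le> x\<^sup>2"
proof -
  assume x: "x \<noteq> 0"
  have "1 \<le> \<bar>x\<bar>" using x by linarith
  then have "1 * 1 \<le> \<bar>x\<bar> * \<bar>x\<bar>" by (intro mult_mono) auto
  then show ?thesis by (simp add: power2_eq_square)
qed

lemma lb_arith: "(v::int) \<le> 2 * c \<Longrightarrow> c \<le> S \<Longrightarrow> even (S - eps) \<Longrightarrow> v = 2 * (v div 2) \<Longrightarrow>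
  (if eps mod 2 = v div 2 mod 2 then v div 2 else v div 2 + 1) \<le> S"
  by presburger

theorem lemma2p2:
  fixes V :: "'a set" and F :: "'a set multiset" and b :: nat and lam eps :: int
  assumes "C2 (card V) b"
    and "assoc_pair (card V) b lam eps"
    and "is_TS V F" and "size F = b"
  defines "mu \<equiv> (if eps mod 2 = (int (card V) div 2) mod 2 then int (card V) div 2
                 else int (card V) div 2 + 1)"
  shows "(\<Sum>e\<in>pairs V. (int (lamP F e))\<^sup>2)
           \<ge> int (card V choose 2) * lam\<^sup>2 + 2 * eps * lam + mu
      \<and> ((\<forall>e\<in>pairs V. int (lamP F e) \<in> {lam - 1, lam, lam + 1}) \<and>
         (if eps mod 2 = (int (card V) div 2) mod 2
          then (\<exists>H. is_H0 V eps H \<and> lg_iso V (defect F lam) H)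
          else (\<exists>H. (is_H1 V eps H \<or> is_H2 V eps H \<or> is_H3 V eps H \<or> is_H4 V eps H)
                    \<and> lg_iso V (defect F lam) H))
         \<longrightarrow> (\<Sum>e\<in>pairs V. (int (lamP F e))\<^sup>2)
               = int (card V choose 2) * lam\<^sup>2 + 2 * eps * lam + mu)"
proof -
  let ?v = "card V"
  let ?P = "pairs V"
  define d where "d e = int (lamP F e) - lam" for e
  have dd: "defect F lam = d" by (auto simp: defect_def d_def)
  from assms(3) have finV: "finite V" and v3: "card V \<ge> 3"
    and blocks: "\<forall>B\<in>#F. B \<subseteq> V \<and> card B = 3" by (auto simp: is_TS_def)
  have finP: "finite ?P" using finite_pairs[OF finV] .
  have cardP: "card ?P = ?v choose 2" using card_pairs[OF finV] .
  have ev: "even ?v" using assms(1) by (simp add: C2_def)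
  have "even (?v * (?v - 1))" using ev by simp
  then have "2 * (?v choose 2) = ?v * (?v - 1)" by (simp add: choose_two)
  then have "int (2 * (?v choose 2)) = int (?v * (?v - 1))" by simp
  then have C2eq: "2 * int (?v choose 2) = int ?v * (int ?v - 1)" using v3
    by (simp add: of_nat_diff)
  obtain lam0 :: int where l0: "odd lam0" "lam0 * int ?v * (int ?v - 1) - int ?v < 6 * int b"
      "6 * int b < lam0 * int ?v * (int ?v - 1) + int ?v"
    using assms(1) unfolding C2_def by blast
  have ap: "3 * int b = lam * int (?v choose 2) + eps" "- int ?v < 2 * eps" "2 * eps < int ?v"
    using assms(2) by (auto simp: assoc_pair_def)
  define w where "w = int ?v * (int ?v - 1)"
  have v4: "?v \<ge> 4" using v3 ev by presburger
  have "int ?v * 3 \<le> int ?v * (int ?v - 1)" using v4 by (intro mult_left_mono) auto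
  then have w3: "w \<ge> 3 * int ?v" unfolding w_def by simp
  have six: "6 * int b = lam * w + 2 * eps" using ap(1) unfolding w_def C2eq[symmetric] by (simp add: algebra_simps)
  have lam0w: "lam0 * w - int ?v < 6 * int b" "6 * int b < lam0 * w + int ?v"
    using l0 unfolding w_def by (simp_all add: mult.assoc)
  have "lam0 = lam"
  proof (rule ccontr)
    assume ne: "lam0 \<noteq> lam"
    show False
    proof (cases "lam0 > lam")
      case True
      then have "(lam0 - lam) * w \<ge> 1 * w" using w3 by (intro mult_right_mono) auto
      then show False using lam0w six ap w3 by (simp add: algebra_simps)
    next
      case False
      then have "(lam - lam0) * w \<ge> 1 * w" using w3 ne by (intro mult_right_mono) auto
      then show False using lam0w six ap w3 by (simp add: algebra_simps)
    qed
  qed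
  then have oddlam: "odd lam" using l0 by simp
  have sumd: "(\<Sum>e\<in>?P. d e) = eps"
  proof -
    have "(\<Sum>e\<in>?P. d e) = (\<Sum>e\<in>?P. int (lamP F e)) - (\<Sum>e\<in>?P. lam)"
      unfolding d_def by (simp add: sum_subtractf)
    also have "(\<Sum>e\<in>?P. int (lamP F e)) = int (3 * size F)"
      using sum_lamP[OF finV blocks] by (metis of_nat_sum)
    finally show ?thesis using ap(1) assms(4) cardP by simp
  qed
  have sqid: "(\<Sum>e\<in>?P. (int (lamP F e))\<^sup>2)
      = int (?v choose 2) * lam\<^sup>2 + 2 * eps * lam + (\<Sum>e\<in>?P. (d e)\<^sup>2)"
  proof -
    have "(\<Sum>e\<in>?P. (int (lamP F e))\<^sup>2) = (\<Sum>e\<in>?P. lam\<^sup>2 + 2 * lam * d e + (d e)\<^sup>2)"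
      by (intro sum.cong) (auto simp: d_def power2_eq_square algebra_simps)
    also have "\<dots> = int (card ?P) * lam\<^sup>2 + 2 * lam * (\<Sum>e\<in>?P. d e) + (\<Sum>e\<in>?P. (d e)\<^sup>2)"
      by (simp add: sum.distrib sum_distrib_left)
    finally show ?thesis using sumd cardP by (simp add: algebra_simps)
  qed
  define Od where "Od = {e\<in>?P. odd (d e)}"
  have cover: "\<forall>x\<in>V. \<exists>e\<in>Od. x \<in> e"
  proof
    fix x assume x: "x \<in> V"
    let ?T = "{e\<in>?P. x\<in>e}"
    have fT: "finite ?T" using finP by simp
    have s0: "(\<Sum>e\<in>?T. lamP F e) = 2 * size {#B\<in>#F. x\<in>B#}"
      using sum_lamP_vertex[OF finV x blocks] .
    have s1: "(\<Sum>e\<in>?T. int (lamP F e)) = 2 * int (size {#B\<in>#F. x\<in>B#})"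
      unfolding of_nat_sum[symmetric] s0 by simp
    have cT: "card ?T = ?v - 1" using card_pairs_through[OF finV x] .
    have cT': "int (card ?T) = int ?v - 1" using cT v3 by (simp add: of_nat_diff)
    have "(\<Sum>e\<in>?T. d e) = (\<Sum>e\<in>?T. int (lamP F e)) - (\<Sum>e\<in>?T. lam)"
      unfolding d_def by (rule sum_subtractf)
    also have "(\<Sum>e\<in>?T. lam) = int (card ?T) * lam" by simp
    finally have sT: "(\<Sum>e\<in>?T. d e) = 2 * int (size {#B\<in>#F. x\<in>B#}) - (int ?v - 1) * lam"
      unfolding s1 cT' .
    have "odd (int ?v - 1)" using ev v3 by simp
    then have "odd ((int ?v - 1) * lam)" using oddlam by simp
    then have od: "odd (\<Sum>e\<in>?T. d e)" unfolding sT by simp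
    have "\<exists>e\<in>?T. odd (d e)"
    proof (rule ccontr)
      assume "\<not> (\<exists>e\<in>?T. odd (d e))"
      then have "even (\<Sum>e\<in>?T. d e)" by (intro dvd_sum) blast
      then show False using od by contradiction
    qed
    then show "\<exists>e\<in>Od. x \<in> e" unfolding Od_def by blast
  qed
  have OP: "Od \<subseteq> ?P" unfolding Od_def by auto
  have finO: "finite Od" using finP OP finite_subset by blast
  have "V \<subseteq> \<Union>Od" using cover by blast
  moreover have "\<Union>Od \<subseteq> V" using OP by (auto simp: pairs_def)
  ultimately have "card V \<le> card (\<Union>Od)" by simp
  also have "\<dots> \<le> sum card Od" by (rule card_Union_le_sum_card)
  also have "sum card Od = 2 * card Od"
    using OP by (simp add: pairs_def subset_iff)
  finally have vO: "int ?v \<le> 2 * int (card Od)" by linarith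
  have SO: "int (card Od) \<le> (\<Sum>e\<in>?P. (d e)\<^sup>2)"
  proof -
    have "int (card Od) = (\<Sum>e\<in>Od. 1)" by simp
    also have "\<dots> \<le> (\<Sum>e\<in>Od. (d e)\<^sup>2)"
    proof (rule sum_mono)
      fix e assume "e \<in> Od"
      then have "d e \<noteq> 0" unfolding Od_def by auto
      then show "1 \<le> (d e)\<^sup>2" by (rule sq_ge1)
    qed
    also have "\<dots> \<le> (\<Sum>e\<in>?P. (d e)\<^sup>2)" by (rule sum_mono2[OF finP OP]) auto
    finally show ?thesis .
  qed
  have par: "even ((\<Sum>e\<in>?P. (d e)\<^sup>2) - eps)"
  proof -
    have "(\<Sum>e\<in>?P. (d e)\<^sup>2) - eps = (\<Sum>e\<in>?P. (d e)\<^sup>2 - d e)"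
      using sumd by (simp add: sum_subtractf)
    moreover have "even (\<Sum>e\<in>?P. (d e)\<^sup>2 - d e)"
      by (rule dvd_sum) (simp add: power2_eq_square)
    ultimately show ?thesis by simp
  qed
  have vv: "int ?v = 2 * (int ?v div 2)" using ev by simp
  have lb: "mu \<le> (\<Sum>e\<in>?P. (d e)\<^sup>2)"
    unfolding mu_def by (rule lb_arith[OF vO SO par vv])
  have eqp: "((\<forall>e\<in>pairs V. int (lamP F e) \<in> {lam - 1, lam, lam + 1}) \<and>
         (if eps mod 2 = (int (card V) div 2) mod 2
          then (\<exists>H. is_H0 V eps H \<and> lg_iso V (defect F lam) H)
          else (\<exists>H. (is_H1 V eps H \<or> is_H2 V eps H \<or> is_H3 V eps H \<or> is_H4 V eps H)
                    \<and> lg_iso V (defect F lam) H))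
         \<longrightarrow> (\<Sum>e\<in>?P. (d e)\<^sup>2) = mu)"
  proof
    assume A: "(\<forall>e\<in>pairs V. int (lamP F e) \<in> {lam - 1, lam, lam + 1}) \<and>
         (if eps mod 2 = (int (card V) div 2) mod 2
          then (\<exists>H. is_H0 V eps H \<and> lg_iso V (defect F lam) H)
          else (\<exists>H. (is_H1 V eps H \<or> is_H2 V eps H \<or> is_H3 V eps H \<or> is_H4 V eps H)
                    \<and> lg_iso V (defect F lam) H))"
    have "(\<Sum>e\<in>?P. (d e)\<^sup>2) = (\<Sum>e\<in>?P. int (if d e \<noteq> 0 then 1 else 0))"
      using A by (intro sum.cong) (auto simp: d_def)
    also have "\<dots> = int (\<Sum>e\<in>?P. (if d e \<noteq> 0 then 1 else 0))" by (metis of_nat_sum)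
    also have "\<dots> = int (card {e\<in>?P. d e \<noteq> 0})" using sum_ind[OF finP] by simp
    finally have Sd: "(\<Sum>e\<in>?P. (d e)\<^sup>2) = int (card {e\<in>?P. d e \<noteq> 0})" .
    show "(\<Sum>e\<in>?P. (d e)\<^sup>2) = mu"
    proof (cases "eps mod 2 = (int (card V) div 2) mod 2")
      case True
      then obtain H where H: "is_H0 V eps H" "lg_iso V d H" using A dd by auto
      have "2 * int (card {e\<in>?P. d e \<noteq> 0}) = int ?v"
        using iso_card[OF finV H(2)] H0_card[OF finV H(1)] by simp
      then show ?thesis using Sd True vv unfolding mu_def by simp
    next
      case False
      then obtain H where H: "is_H1 V eps H \<or> is_H2 V eps H \<or> is_H3 V eps H \<or> is_H4 V eps H"
        "lg_iso V d H" using A dd by auto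
      have "4 * int (card {e\<in>?P. H e \<noteq> 0}) = 2 * int ?v + 4"
        using H(1) Hstar_card[OF finV, of _ _ _ _ H]
        unfolding is_H1_def is_H2_def is_H3_def is_H4_def by fastforce
      then have "4 * int (card {e\<in>?P. d e \<noteq> 0}) = 2 * int ?v + 4"
        using iso_card[OF finV H(2)] by simp
      then show ?thesis using Sd False vv unfolding mu_def by simp
    qed
  qed
  show ?thesis unfolding sqid
    apply (intro conjI impI)
    subgoal using lb by linarith
    subgoal premises p using mp[OF eqp p] by linarith
    done
qed

end
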